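(* For every $d$-dimensional state $\rho$, every $\epsilon>0$ and every real-valued function $f$ on the set of probability distributions on $[d]$, \[ \min_{q\in V_\epsilon(\delta_\rho)}f(q)\le\min_{\sigma\in V_\epsilon(\rho)}f(\delta_\sigma)\le\min_{q\in V_{\epsilon^2/4}(\delta_\rho)}f(q). \]
   Context: Fixed computational basis; $\Pi_I=\sum_{i\in I}|i\rangle\langle i|$. For a state $\omega$, $\delta_\omega\in\mathbb R^d$ is its diagonal, $(\delta_\omega)_j=\omega_{jj}$. Quantum set: $V_\epsilon(\rho)=\{\Pi_I\rho\Pi_I/\mathrm{Tr}[\rho\Pi_I]:\ I\subseteq[d]\}\cap\{\sigma:\|\sigma-\rho\|_1\le\epsilon\}$ (only $I$ with $\mathrm{Tr}[\rho\Pi_I]>0$). Classical set for a probability vector $p\in\mathbb R^d$: $V_\epsilon(p)=\{\Pi_Ip/\sum_{i\in I}p_i:\ I\subseteq[d]\}\cap\{q:|q-p|_1\le\epsilon\}$ (only $I$ with $\sum_{i\in I}p_i>0$), $|\cdot|_1$ the $\ell_1$ norm and $\Pi_Ip$ the vector keeping the entries of $p$ indexed by $I$ and zeroing the others. *)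

theory Defs
  imports "HOL-Analysis.Analysis"
begin

text \<open>Matrices on C^d are type-indexed: complex^'d^'d with 'd a finite type, [d] = UNIV.\<close>

definition adj :: "complex^'d^'d \<Rightarrow> complex^'d^'d" where
  "adj A = (\<chi> i j. cnj (A $ j $ i))"

definition mtrace :: "complex^'d^'d \<Rightarrow> complex" where
  "mtrace A = (\<Sum>i\<in>UNIV. A $ i $ i)"

definition hermitian :: "complex^'d^'d \<Rightarrow> bool" where
  "hermitian A \<longleftrightarrow> adj A = A"

definition psd :: "complex^'d^'d \<Rightarrow> bool" where
  "psd A \<longleftrightarrow> hermitian A \<and>
     (\<forall>x::complex^'d. let v = (\<Sum>i\<in>UNIV. cnj (x $ i) * (A *v x) $ i) in Im v = 0 \<and> 0 \<le> Re v)"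

definition density :: "complex^'d^'d \<Rightarrow> bool" where
  "density A \<longleftrightarrow> psd A \<and> mtrace A = 1"

definition unitary :: "complex^'d^'d \<Rightarrow> bool" where
  "unitary U \<longleftrightarrow> adj U ** U = mat 1"

definition rdiag :: "real^'d \<Rightarrow> complex^'d^'d" where
  "rdiag s = (\<chi> i j. if i = j then complex_of_real (s $ i) else 0)"

definition trace_norm :: "complex^'d^'d \<Rightarrow> real" where
  "trace_norm A = (SOME t. \<exists>U V s. unitary U \<and> unitary V \<and> (\<forall>i. 0 \<le> s $ i)
      \<and> A = U ** rdiag s ** adj V \<and> t = (\<Sum>i\<in>UNIV. s $ i))"

definition proj :: "'d set \<Rightarrow> complex^'d^'d" where
  "proj I = (\<chi> i j. if i = j \<and> i \<in> I then 1 else 0)"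

definition diagv :: "complex^'d^'d \<Rightarrow> real^'d" where
  "diagv A = (\<chi> j. Re (A $ j $ j))"

definition Vq :: "real \<Rightarrow> complex^'d^'d \<Rightarrow> (complex^'d^'d) set" where
  "Vq eps \<rho> = {\<sigma>. \<exists>I. 0 < Re (mtrace (\<rho> ** proj I)) \<and>
        \<sigma> = (\<chi> i j. (proj I ** \<rho> ** proj I) $ i $ j / mtrace (\<rho> ** proj I))}
     \<inter> {\<sigma>. trace_norm (\<sigma> - \<rho>) \<le> eps}"

definition Vc :: "real \<Rightarrow> real^'d \<Rightarrow> (real^'d) set" where
  "Vc eps p = {q. \<exists>I. 0 < (\<Sum>i\<in>I. p $ i) \<and>
        q = (\<chi> i. if i \<in> I then p $ i / (\<Sum>k\<in>I. p $ k) else 0)}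
     \<inter> {q. (\<Sum>i\<in>UNIV. \<bar>q $ i - p $ i\<bar>) \<le> eps}"

end

theory Submission
  imports Defs
begin


definition cip :: "complex^'n \<Rightarrow> complex^'n \<Rightarrow> complex" where
  "cip x y = (\<Sum>i\<in>UNIV. cnj (x $ i) * y $ i)"

lemma cip_sym: "cip y x = cnj (cip x y)"
  by (simp add: cip_def cnj_sum mult.commute)

lemma cip_adj: "cip x (A *v y) = cip (adj A *v x) y"
proof -
  have "cip x (A *v y) = (\<Sum>i\<in>UNIV. \<Sum>j\<in>UNIV. cnj (x $ i) * A $ i $ j * y $ j)"
    unfolding cip_def matrix_vector_mult_def by (simp add: sum_distrib_left mult_ac)
  also have "\<dots> = (\<Sum>j\<in>UNIV. \<Sum>i\<in>UNIV. cnj (x $ i) * A $ i $ j * y $ j)"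
    by (rule sum.swap)
  also have "\<dots> = cip (adj A *v x) y"
    unfolding cip_def matrix_vector_mult_def adj_def by (simp add: sum_distrib_left sum_distrib_right cnj_sum mult_ac)
  finally show ?thesis .
qed

lemma cip_herm: "hermitian A \<Longrightarrow> cip x (A *v y) = cip (A *v x) y"
  using cip_adj[of x A y] by (simp add: hermitian_def)

lemma cip_add_right: "cip x (y + z) = cip x y + cip x z"
  by (simp add: cip_def sum.distrib algebra_simps)
lemma cip_add_left: "cip (x + y) z = cip x z + cip y z"
  by (simp add: cip_def sum.distrib algebra_simps)
lemma cip_diff_right: "cip x (y - z) = cip x y - cip x z"
  by (simp add: cip_def sum_subtractf algebra_simps)
lemma cip_diff_left: "cip (x - y) z = cip x z - cip y z"
  by (simp add: cip_def sum_subtractf algebra_simps)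
lemma cip_scaleR_right: "cip x (r *\<^sub>R y) = of_real r * cip x y"
  unfolding cip_def sum_distrib_left by (intro sum.cong refl) (simp add: scaleR_conv_of_real[where 'a=complex])
lemma cip_scaleR_left: "cip (r *\<^sub>R x) y = of_real r * cip x y"
  unfolding cip_def sum_distrib_left by (intro sum.cong refl) (simp add: scaleR_conv_of_real[where 'a=complex])
lemma cip_smult_right: "cip x (c *s y) = c * cip x y"
  by (simp add: cip_def sum_distrib_left algebra_simps)
lemma cip_smult_left: "cip (c *s x) y = cnj c * cip x y"
  by (simp add: cip_def sum_distrib_left algebra_simps)
lemma cip_zero_right[simp]: "cip x 0 = 0"
  by (simp add: cip_def)

lemma cip_self: "cip x x = of_real ((norm x)\<^sup>2)"
proof -
  have "cip x x = (\<Sum>i\<in>UNIV. of_real ((cmod (x $ i))\<^sup>2))"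
    unfolding cip_def by (intro sum.cong refl) (metis complex_norm_square mult.commute of_real_power)
  also have "\<dots> = of_real ((norm x)\<^sup>2)"
    by (simp add: norm_vec_def L2_set_def sum_nonneg)
  finally show ?thesis .
qed

lemma cip_self_eq0: "cip x x = 0 \<longleftrightarrow> x = 0"
  by (simp add: cip_self)

lemma cip_herm_real: "hermitian A \<Longrightarrow> cip x (A *v x) = of_real (Re (cip x (A *v x)))"
  by (metis cip_herm cip_sym complex_is_Real_iff Reals_cnj_iff of_real_Re)

lemma quad_lin0:
  fixes a c :: real
  assumes "\<And>t. 2 * t * a + t\<^sup>2 * c \<le> 0"
  shows "a = 0"
proof (rule ccontr)
  assume a: "a \<noteq> 0"
  define k where "k = \<bar>c\<bar> + 1"
  have pos: "k > 0" by (simp add: k_def)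
  define t where "t = a / k"
  have tk: "t * k = a" using pos by (simp add: t_def)
  have "2 * t * a + t\<^sup>2 * c \<le> 0" by (rule assms)
  hence "(2 * t * a + t\<^sup>2 * c) * k\<^sup>2 \<le> 0"
    by (simp add: mult_nonpos_nonneg)
  moreover have "(2 * t * a + t\<^sup>2 * c) * k\<^sup>2 = 2 * a * (t * k) * k + (t * k)\<^sup>2 * c"
    by algebra
  ultimately have "2 * a * a * k + a\<^sup>2 * c \<le> 0" by (simp add: tk)
  hence "a\<^sup>2 * (2 * k + c) \<le> 0" by (simp add: algebra_simps power2_eq_square)
  moreover have "a\<^sup>2 * (2 * k + c) > 0"
    using a unfolding k_def by (intro mult_pos_pos) (auto simp: abs_if split: if_splits)
  ultimately show False by linarith
qed



lemma mvs: "(A::complex^'n^'m) *v (r *\<^sub>R y) = r *\<^sub>R (A *v y)"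
  by (simp add: vec_eq_iff matrix_vector_mult_def scaleR_sum_right)

lemma exists_orth:
  fixes v :: "'j \<Rightarrow> complex^'d"
  assumes fJ: "finite J" and cJ: "card J < CARD('d)"
  shows "\<exists>z. z \<noteq> 0 \<and> (\<forall>j\<in>J. cip (v j) z = 0)"
proof -
  define S where "S = v ` J \<union> (\<lambda>j. \<i> *s v j) ` J"
  have fS: "finite S" using fJ by (simp add: S_def)
  have "card S \<le> card (v ` J) + card ((\<lambda>j. \<i> *s v j) ` J)" unfolding S_def by (rule card_Un_le)
  also have "\<dots> \<le> card J + card J" by (intro add_mono card_image_le fJ)
  finally have cS: "card S < DIM(complex^'d)" using cJ by simp
  have "span S \<noteq> UNIV"
  proof
    assume "span S = UNIV"
    hence "dim S = DIM(complex^'d)" by (metis dim_UNIV dim_span)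
    moreover have "dim S \<le> card S" using fS by (intro dim_le_card) (auto intro: span_base)
    ultimately show False using cS by simp
  qed
  then obtain a where a: "a \<noteq> 0" "\<forall>x\<in>span S. a \<bullet> x = 0" using span_not_UNIV_orthogonal by blast
  have key: "a \<bullet> w = Re (cip w a)" for w :: "complex^'d"
    by (simp add: inner_vec_def cip_def inner_complex_def Re_sum algebra_simps)
  have key2: "a \<bullet> (\<i> *s w) = Im (cip w a)" for w :: "complex^'d"
    by (simp add: inner_vec_def cip_def inner_complex_def Im_sum algebra_simps)
  have "cip (v j) a = 0" if "j \<in> J" for j
  proof -
    have "v j \<in> span S" "\<i> *s v j \<in> span S" using that by (auto simp: S_def intro: span_base)
    hence "Re (cip (v j) a) = 0" "Im (cip (v j) a) = 0" using a(2) key key2 by metis+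
    thus ?thesis by (simp add: complex_eq_iff)
  qed
  thus ?thesis using a(1) by blast
qed

lemma cont_cip: "continuous_on UNIV (\<lambda>x. cip w x)"
  unfolding cip_def by (intro continuous_intros continuous_on_component continuous_on_id)

lemma cont_quad: "continuous_on S (\<lambda>x. Re (cip x (A *v x)))"
  unfolding cip_def matrix_vector_mult_def
  by (simp, intro continuous_intros continuous_on_component continuous_on_id)

lemma new_eig:
  fixes A :: "complex^'d^'d" and v :: "'d \<Rightarrow> complex^'d"
  assumes herm: "hermitian A" and J: "card J < CARD('d)"
    and eig: "\<And>j. j \<in> J \<Longrightarrow> \<exists>\<mu>::real. A *v v j = \<mu> *\<^sub>R v j"
  shows "\<exists>x. cip x x = 1 \<and> (\<forall>j\<in>J. cip (v j) x = 0) \<and> (\<exists>\<mu>::real. A *v x = \<mu> *\<^sub>R x)"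
proof -
  have fJ: "finite J" by simp
  define orth where "orth y \<longleftrightarrow> (\<forall>j\<in>J. cip (v j) y = 0)" for y
  define K where "K = {x::complex^'d. norm x = 1 \<and> orth x}"
  define g where "g x = Re (cip x (A *v x))" for x
  obtain z where z: "z \<noteq> 0" "orth z" using exists_orth[OF fJ J] unfolding orth_def by blast
  have "(1 / norm z) *\<^sub>R z \<in> K" using z by (simp add: K_def orth_def cip_scaleR_right)
  hence Kne: "K \<noteq> {}" by blast
  have Kc: "compact K"
  proof -
    have "K = (\<Inter>j\<in>J. {x. cip (v j) x = 0}) \<inter> sphere 0 1" by (auto simp: K_def orth_def)
    moreover have "closed (\<Inter>j\<in>J. {x. cip (v j) x = 0})"
      by (intro closed_INT ballI closed_Collect_eq cont_cip continuous_on_const)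
    ultimately show ?thesis by (simp add: closed_Int_compact)
  qed
  obtain x where xK: "x \<in> K" and xmax: "\<And>y. y \<in> K \<Longrightarrow> g y \<le> g x"
    using continuous_attains_sup[OF Kc Kne cont_quad[of K A]] unfolding g_def by blast
  define l where "l = g x"
  have xx: "cip x x = 1" using xK by (simp add: K_def cip_self)
  have xo: "orth x" using xK by (simp add: K_def)
  have bound: "Re (cip y (A *v y)) \<le> l * Re (cip y y)" if "orth y" for y
  proof (cases "y = 0")
    case True thus ?thesis by (simp add: cip_def)
  next
    case False
    define y' where "y' = (1 / norm y) *\<^sub>R y"
    have "y' \<in> K" using that False by (simp add: K_def orth_def y'_def cip_scaleR_right)
    hence gl: "g y' \<le> l" using xmax l_def by blast
    have Ay: "A *v y' = (1 / norm y) *\<^sub>R (A *v y)" unfolding y'_def by (rule mvs)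
    moreover have "g y' = Re (cip y (A *v y)) / (norm y)\<^sup>2"
      unfolding g_def Ay by (simp add: y'_def mvs cip_scaleR_left cip_scaleR_right power2_eq_square)
    moreover have "Re (cip y y) = (norm y)\<^sup>2" by (simp add: cip_self)
    ultimately show ?thesis using False gl by (simp add: divide_le_eq mult.commute)
  qed
  have re0: "Re (cip y (A *v x)) = 0" if "orth y" "cip x y = 0" for y
  proof -
    define w where "w = cip y (A *v x)"
    have "2 * t * Re w + t\<^sup>2 * (Re (cip y (A *v y)) - l * Re (cip y y)) \<le> 0" for t
    proof -
      define zt where "zt = x + t *\<^sub>R y"
      have "orth zt" using that xo by (simp add: orth_def zt_def cip_add_right cip_scaleR_right)
      hence b: "Re (cip zt (A *v zt)) \<le> l * Re (cip zt zt)" by (rule bound)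
      have e1: "cip zt (A *v zt) = cip x (A *v x) + of_real t * cip x (A *v y) + of_real t * cip y (A *v x) + of_real t * of_real t * cip y (A *v y)"
        by (simp add: zt_def matrix_vector_right_distrib mvs cip_add_left cip_add_right cip_scaleR_left cip_scaleR_right algebra_simps)
      have e2: "cip x (A *v y) = cnj w" using cip_herm[OF herm, of x y] cip_sym[of "A *v x" y] by (simp add: w_def)
      have e3: "cip zt zt = 1 + of_real t * of_real t * cip y y"
        using that(2) cip_sym[of y x] xx
        by (simp add: zt_def cip_add_left cip_add_right cip_scaleR_left cip_scaleR_right algebra_simps)
      have "Re (cip zt (A *v zt)) = l + 2 * t * Re w + t\<^sup>2 * Re (cip y (A *v y))"
        using e1 e2 by (simp add: l_def g_def w_def power2_eq_square)
      moreover have "Re (cip zt zt) = 1 + t\<^sup>2 * Re (cip y y)" using e3 by (simp add: power2_eq_square)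
      ultimately show ?thesis using b by (simp add: algebra_simps)
    qed
    thus ?thesis using quad_lin0 w_def by blast
  qed
  have perp: "cip y (A *v x) = 0" if "orth y" "cip x y = 0" for y
  proof -
    have "orth (\<i> *s y)" using that(1) by (simp add: orth_def cip_smult_right)
    moreover have "cip x (\<i> *s y) = 0" using that(2) by (simp add: cip_smult_right)
    ultimately have "Re (cip (\<i> *s y) (A *v x)) = 0" by (rule re0)
    hence "Im (cip y (A *v x)) = 0" by (simp add: cip_smult_left)
    moreover have "Re (cip y (A *v x)) = 0" using re0 that by blast
    ultimately show ?thesis by (simp add: complex_eq_iff)
  qed
  define zz where "zz = A *v x - l *\<^sub>R x"
  have xAx: "cip x (A *v x) = of_real l" using cip_herm_real[OF herm, of x] by (simp add: l_def g_def)
  have "orth zz"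
    unfolding orth_def
  proof
    fix j assume j: "j \<in> J"
    then obtain m :: real where m: "A *v v j = m *\<^sub>R v j" using eig by blast
    have "cip (v j) (A *v x) = cip (A *v v j) x" by (rule cip_herm[OF herm])
    also have "\<dots> = 0" using xo j by (simp add: m cip_scaleR_left orth_def)
    finally show "cip (v j) zz = 0" using xo j by (simp add: zz_def cip_diff_right cip_scaleR_right orth_def)
  qed
  moreover have "cip x zz = 0" by (simp add: zz_def cip_diff_right cip_scaleR_right xAx xx)
  ultimately have "cip zz (A *v x) = 0" by (rule perp)
  moreover have "cip zz (l *\<^sub>R x) = 0"
    using \<open>cip x zz = 0\<close> cip_sym[of zz x] by (simp add: cip_scaleR_right)
  ultimately have "cip zz zz = 0" by (simp add: zz_def cip_diff_right)
  hence "zz = 0" by (simp add: cip_self_eq0)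
  hence "A *v x = l *\<^sub>R x" by (simp add: zz_def)
  thus ?thesis using xx xo unfolding orth_def by blast
qed

lemma eig_family:
  fixes A :: "complex^'d^'d"
  assumes herm: "hermitian A"
  shows "finite J \<Longrightarrow> \<exists>v::'d \<Rightarrow> complex^'d. (\<forall>j\<in>J. \<forall>k\<in>J. cip (v j) (v k) = (if j = k then 1 else 0))
          \<and> (\<forall>j\<in>J. \<exists>\<mu>::real. A *v v j = \<mu> *\<^sub>R v j)"
proof (induction J rule: finite_induct)
  case empty thus ?case by auto
next
  case (insert a J)
  then obtain v where v1: "\<forall>j\<in>J. \<forall>k\<in>J. cip (v j) (v k) = (if j = k then 1 else 0)"
      and v2: "\<forall>j\<in>J. \<exists>\<mu>::real. A *v v j = \<mu> *\<^sub>R v j" by blast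
  have "J \<subset> UNIV" using insert(2) by blast
  hence "card J < CARD('d)" by (simp add: psubset_card_mono)
  then obtain x where x: "cip x x = 1" "\<forall>j\<in>J. cip (v j) x = 0" "\<exists>\<mu>::real. A *v x = \<mu> *\<^sub>R x"
    using new_eig[OF herm, of J v] v2 by blast
  have x': "\<forall>j\<in>J. cip x (v j) = 0" using x(2) cip_sym[of x] by simp
  show ?case
    apply (rule exI[of _ "v(a := x)"])
    using v1 v2 x x' insert(2) by auto
qed



lemma adj_mult: "adj (A ** B) = adj B ** adj A"
  by (simp add: vec_eq_iff adj_def matrix_matrix_mult_def cnj_sum mult.commute)
lemma adj_adj[simp]: "adj (adj A) = A"
  by (simp add: vec_eq_iff adj_def)
lemma adj_add: "adj (A + B) = adj A + adj B"
  by (simp add: vec_eq_iff adj_def)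
lemma adj_diff: "adj (A - B) = adj A - adj B"
  by (simp add: vec_eq_iff adj_def)
lemma adj_scaleR: "adj (r *\<^sub>R A) = r *\<^sub>R adj A"
  by (simp add: vec_eq_iff adj_def scaleR_conv_of_real[where 'a=complex])
lemma adj_mat1[simp]: "adj (mat 1) = mat 1"
  by (simp add: vec_eq_iff adj_def mat_def)
lemma adj_rdiag[simp]: "adj (rdiag s) = rdiag s"
  by (simp add: vec_eq_iff adj_def rdiag_def)
lemma rdiag_mult: "rdiag a ** rdiag b = rdiag (a * b)"
proof -
  have "(rdiag a ** rdiag b) $ i $ j = rdiag (a * b) $ i $ j" for i j
    by (simp add: rdiag_def matrix_matrix_mult_def if_distrib[where f="\<lambda>x. _ * x"] sum.delta' cong: if_cong)
  thus ?thesis by (simp add: vec_eq_iff)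
qed
lemma rdiag_one: "rdiag 1 = mat 1"
  by (simp add: vec_eq_iff rdiag_def mat_def)

lemma unitary_right: "unitary U \<Longrightarrow> U ** adj U = mat 1"
  unfolding unitary_def using matrix_left_right_inverse by blast

lemma spectral:
  fixes A :: "complex^'d^'d"
  assumes herm: "hermitian A"
  shows "\<exists>U (m::real^'d). unitary U \<and> A = U ** rdiag m ** adj U"
proof -
  obtain v :: "'d \<Rightarrow> complex^'d" where v1: "\<forall>j k. cip (v j) (v k) = (if j = k then 1 else 0)"
      and v2: "\<forall>j. \<exists>\<mu>::real. A *v v j = \<mu> *\<^sub>R v j"
    using eig_family[OF herm, of UNIV] by auto
  obtain mu where mu: "\<And>j. A *v v j = mu j *\<^sub>R v j" using v2 by metis
  define U :: "complex^'d^'d" where "U = (\<chi> i k. v k $ i)"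
  define m :: "real^'d" where "m = (\<chi> k. mu k)"
  have "(adj U ** U) $ j $ k = mat 1 $ j $ k" for j k
    using v1[rule_format, of j k] by (simp add: adj_def U_def matrix_matrix_mult_def mat_def cip_def)
  hence uU: "unitary U" by (simp add: unitary_def vec_eq_iff)
  have "(A ** U) $ i $ k = (U ** rdiag m) $ i $ k" for i k
  proof -
    have "(A ** U) $ i $ k = (A *v v k) $ i"
      by (simp add: U_def matrix_matrix_mult_def matrix_vector_mult_def)
    also have "\<dots> = v k $ i * of_real (mu k)" by (simp add: mu scaleR_conv_of_real[where 'a=complex])
    also have "\<dots> = (U ** rdiag m) $ i $ k"
      by (simp add: U_def m_def rdiag_def matrix_matrix_mult_def if_distrib[where f="\<lambda>x. _ * x"] sum.delta' cong: if_cong)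
    finally show ?thesis .
  qed
  hence AU: "A ** U = U ** rdiag m" by (simp add: vec_eq_iff)
  have "A = A ** (U ** adj U)" using unitary_right[OF uU] by simp
  also have "\<dots> = U ** rdiag m ** adj U" by (simp add: matrix_mul_assoc AU)
  finally show ?thesis using uU by blast
qed

lemma svd_herm:
  fixes A :: "complex^'d^'d"
  assumes herm: "hermitian A"
  shows "\<exists>U V s. unitary U \<and> unitary V \<and> (\<forall>i. 0 \<le> s $ i) \<and> A = U ** rdiag s ** adj V"
proof -
  obtain U m where uU: "unitary U" and A: "A = U ** rdiag m ** adj U" using spectral[OF herm] by blast
  define sg :: "real^'d" where "sg = (\<chi> i. if 0 \<le> m $ i then 1 else -1)"
  define s :: "real^'d" where "s = (\<chi> i. \<bar>m $ i\<bar>)"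
  define V where "V = U ** rdiag sg"
  have sgsg: "sg * sg = 1" by (simp add: vec_eq_iff sg_def)
  have ssg: "s * sg = m" by (simp add: vec_eq_iff sg_def s_def)
  have "adj V ** V = rdiag sg ** (adj U ** U) ** rdiag sg"
    by (simp add: V_def adj_mult matrix_mul_assoc)
  also have "\<dots> = mat 1" using uU by (simp add: unitary_def rdiag_mult sgsg rdiag_one)
  finally have uV: "unitary V" by (simp add: unitary_def)
  have "U ** rdiag s ** adj V = U ** (rdiag s ** rdiag sg) ** adj U"
    by (simp add: V_def adj_mult matrix_mul_assoc)
  also have "\<dots> = A" by (simp add: rdiag_mult ssg A)
  finally show ?thesis using uU uV by (metis s_def abs_ge_zero vec_lambda_beta)
qed

lemma trace_norm_svd:
  fixes A :: "complex^'d^'d"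
  assumes "hermitian A"
  shows "\<exists>U V s. unitary U \<and> unitary V \<and> (\<forall>i. 0 \<le> s $ i) \<and> A = U ** rdiag s ** adj V
           \<and> trace_norm A = (\<Sum>i\<in>UNIV. s $ i)"
proof -
  have "\<exists>t. \<exists>U V s. unitary U \<and> unitary V \<and> (\<forall>i. 0 \<le> s $ i) \<and> A = U ** rdiag s ** adj V \<and> t = (\<Sum>i\<in>UNIV. s $ i)"
    using svd_herm[OF assms] by blast
  from someI_ex[OF this] show ?thesis unfolding trace_norm_def by blast
qed

lemma mtrace_comm: "mtrace (A ** B) = mtrace (B ** A)"
proof -
  have "mtrace (A ** B) = (\<Sum>i\<in>UNIV. \<Sum>k\<in>UNIV. A $ i $ k * B $ k $ i)"
    unfolding mtrace_def matrix_matrix_mult_def by simp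
  also have "\<dots> = (\<Sum>k\<in>UNIV. \<Sum>i\<in>UNIV. A $ i $ k * B $ k $ i)" by (rule sum.swap)
  also have "\<dots> = mtrace (B ** A)"
    unfolding mtrace_def matrix_matrix_mult_def by (simp add: mult.commute)
  finally show ?thesis .
qed

lemma mtrace_add: "mtrace (A + B) = mtrace A + mtrace B"
  by (simp add: mtrace_def sum.distrib)
lemma mtrace_diff: "mtrace (A - B) = mtrace A - mtrace B"
  by (simp add: mtrace_def sum_subtractf)
lemma mtrace_scaleR: "mtrace (r *\<^sub>R A) = of_real r * mtrace A"
  by (simp add: mtrace_def sum_distrib_left scaleR_conv_of_real[where 'a=complex])

lemma tr_cols: "mtrace (adj U ** M ** V) = (\<Sum>k\<in>UNIV. cip (column k U) (M *v column k V))"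
proof -
  have "mtrace (adj U ** M ** V) = (\<Sum>k\<in>UNIV. \<Sum>j\<in>UNIV. (\<Sum>i\<in>UNIV. cnj (U $ i $ k) * M $ i $ j) * V $ j $ k)"
    unfolding mtrace_def matrix_matrix_mult_def adj_def by simp
  also have "\<dots> = (\<Sum>k\<in>UNIV. \<Sum>j\<in>UNIV. \<Sum>i\<in>UNIV. cnj (U $ i $ k) * M $ i $ j * V $ j $ k)"
    by (simp add: sum_distrib_right)
  also have "\<dots> = (\<Sum>k\<in>UNIV. \<Sum>i\<in>UNIV. \<Sum>j\<in>UNIV. cnj (U $ i $ k) * M $ i $ j * V $ j $ k)"
    by (intro sum.cong refl sum.swap)
  also have "\<dots> = (\<Sum>k\<in>UNIV. cip (column k U) (M *v column k V))"
    unfolding cip_def matrix_vector_mult_def column_def by (simp add: sum_distrib_left mult_ac)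
  finally show ?thesis .
qed



lemma psd_form: "psd A \<Longrightarrow> Im (cip x (A *v x)) = 0 \<and> 0 \<le> Re (cip x (A *v x))"
  unfolding psd_def cip_def Let_def by blast

lemma psd_herm: "psd A \<Longrightarrow> hermitian A"
  unfolding psd_def by blast

lemma cs_real:
  fixes al be W :: real
  assumes al: "0 \<le> al" and be: "0 \<le> be" and W: "0 \<le> W"
    and h: "\<And>t. 0 \<le> al - 2 * t * W + t\<^sup>2 * W * be"
  shows "W \<le> al * be"
proof (cases "be = 0")
  case True
  show ?thesis
  proof (rule ccontr)
    assume "\<not> W \<le> al * be"
    hence Wp: "W > 0" using True by simp
    have "0 \<le> al - 2 * ((al + 1) / (2 * W)) * W" using h[of "(al + 1) / (2 * W)"] True by simp
    also have "\<dots> = -1" using Wp by (simp add: field_simps)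
    finally show False by simp
  qed
next
  case False
  hence bp: "be > 0" using be by simp
  have "0 \<le> al - 2 * (1 / be) * W + (1 / be)\<^sup>2 * W * be" by (rule h)
  also have "\<dots> = al - W / be" using bp by (simp add: field_simps power2_eq_square)
  finally show ?thesis using bp by (simp add: field_simps mult.commute)
qed

lemma cs_form:
  fixes \<rho> :: "complex^'d^'d"
  assumes psd: "psd \<rho>"
  shows "(cmod (cip a (\<rho> *v b)))\<^sup>2 \<le> Re (cip a (\<rho> *v a)) * Re (cip b (\<rho> *v b))"
proof -
  have herm: "hermitian \<rho>" using psd by (rule psd_herm)
  define w where "w = cip a (\<rho> *v b)"
  define W where "W = (cmod w)\<^sup>2"
  define al where "al = cip a (\<rho> *v a)"
  define be where "be = cip b (\<rho> *v b)"
  have wW: "cnj w * w = of_real W" unfolding W_def by (metis complex_norm_square mult.commute of_real_power)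
  have ba: "cip b (\<rho> *v a) = cnj w"
    using cip_herm[OF herm, of b a] cip_sym[of "\<rho> *v b" a] by (simp add: w_def)
  have "0 \<le> Re al - 2 * t * W + t\<^sup>2 * W * Re be" for t
  proof -
    define c where "c = - (of_real t * cnj w)"
    define z where "z = a + c *s b"
    have "cip z (\<rho> *v z) = al + c * w + cnj c * cnj w + cnj c * c * be"
      by (simp add: z_def matrix_vector_right_distrib vector_scalar_commute cip_add_left cip_add_right
          cip_smult_left cip_smult_right al_def be_def w_def[symmetric] ba algebra_simps)
    also have "\<dots> = al - of_real (2 * t * W) + of_real (t\<^sup>2 * W) * be"
    proof -
      have "c * w = - of_real (t * W)" using wW by (simp add: c_def algebra_simps)
      moreover have "cnj c * cnj w = - of_real (t * W)" using wW by (simp add: c_def algebra_simps)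
      moreover have "cnj c * c = of_real (t\<^sup>2 * W)" using wW by (simp add: c_def algebra_simps power2_eq_square)
      ultimately show ?thesis by simp
    qed
    finally have "Re (cip z (\<rho> *v z)) = Re al - 2 * t * W + t\<^sup>2 * W * Re be" by simp
    thus ?thesis using psd_form[OF psd, of z] by simp
  qed
  hence "W \<le> Re al * Re be"
    using psd_form[OF psd, of a] psd_form[OF psd, of b] by (intro cs_real) (auto simp: al_def be_def W_def)
  thus ?thesis by (simp add: W_def w_def al_def be_def)
qed

lemma col_norm: "unitary U \<Longrightarrow> (\<Sum>i\<in>UNIV. (cmod (U $ i $ k))\<^sup>2) = 1"
proof -
  assume u: "unitary U"
  have "(adj U ** U) $ k $ k = 1" using u by (simp add: unitary_def mat_def)
  hence "(\<Sum>i\<in>UNIV. cnj (U $ i $ k) * U $ i $ k) = 1" by (simp add: adj_def matrix_matrix_mult_def)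
  moreover have "cnj (U $ i $ k) * U $ i $ k = of_real ((cmod (U $ i $ k))\<^sup>2)" for i
    by (metis complex_norm_square mult.commute of_real_power)
  ultimately have "of_real (\<Sum>i\<in>UNIV. (cmod (U $ i $ k))\<^sup>2) = (1::complex)" by simp
  thus ?thesis by (metis of_real_eq_1_iff)
qed

lemma svd_diag_bound:
  fixes A :: "complex^'d^'d"
  assumes uU: "unitary U" and uV: "unitary V" and s: "\<forall>i. 0 \<le> s $ i" and A: "A = U ** rdiag s ** adj V"
  shows "(\<Sum>i\<in>UNIV. cmod (A $ i $ i)) \<le> (\<Sum>k\<in>UNIV. s $ k)"
proof -
  have Aii: "A $ i $ i = (\<Sum>k\<in>UNIV. U $ i $ k * of_real (s $ k) * cnj (V $ i $ k))" for i
    by (simp add: A matrix_matrix_mult_def rdiag_def adj_def if_distrib[where f="\<lambda>x. _ * x"] sum.delta' cong: if_cong)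
  have "cmod (A $ i $ i) \<le> (\<Sum>k\<in>UNIV. s $ k * ((cmod (U $ i $ k))\<^sup>2 + (cmod (V $ i $ k))\<^sup>2) / 2)" for i
  proof -
    have "cmod (A $ i $ i) \<le> (\<Sum>k\<in>UNIV. cmod (U $ i $ k * of_real (s $ k) * cnj (V $ i $ k)))"
      unfolding Aii by (rule norm_sum)
    also have "\<dots> \<le> (\<Sum>k\<in>UNIV. s $ k * ((cmod (U $ i $ k))\<^sup>2 + (cmod (V $ i $ k))\<^sup>2) / 2)"
    proof (rule sum_mono)
      fix k
      have "cmod (U $ i $ k * of_real (s $ k) * cnj (V $ i $ k)) = s $ k * (cmod (U $ i $ k) * cmod (V $ i $ k))"
        using s by (simp add: norm_mult)
      also have "\<dots> \<le> s $ k * (((cmod (U $ i $ k))\<^sup>2 + (cmod (V $ i $ k))\<^sup>2) / 2)"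
        using s sum_squares_bound[of "cmod (U $ i $ k)" "cmod (V $ i $ k)"]
        by (intro mult_left_mono) (auto simp: field_simps)
      finally show "cmod (U $ i $ k * of_real (s $ k) * cnj (V $ i $ k)) \<le> s $ k * ((cmod (U $ i $ k))\<^sup>2 + (cmod (V $ i $ k))\<^sup>2) / 2"
        by simp
    qed
    finally show ?thesis .
  qed
  hence "(\<Sum>i\<in>UNIV. cmod (A $ i $ i)) \<le> (\<Sum>i\<in>UNIV. \<Sum>k\<in>UNIV. s $ k * ((cmod (U $ i $ k))\<^sup>2 + (cmod (V $ i $ k))\<^sup>2) / 2)"
    by (rule sum_mono)
  also have "\<dots> = (\<Sum>k\<in>UNIV. \<Sum>i\<in>UNIV. s $ k * ((cmod (U $ i $ k))\<^sup>2 + (cmod (V $ i $ k))\<^sup>2) / 2)"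
    by (rule sum.swap)
  also have "\<dots> = (\<Sum>k\<in>UNIV. s $ k * ((\<Sum>i\<in>UNIV. (cmod (U $ i $ k))\<^sup>2) + (\<Sum>i\<in>UNIV. (cmod (V $ i $ k))\<^sup>2)) / 2)"
    by (intro sum.cong refl) (simp add: sum_distrib_left sum.distrib sum_divide_distrib[symmetric] distrib_left)
  also have "\<dots> = (\<Sum>k\<in>UNIV. s $ k)" by (simp add: col_norm[OF uU] col_norm[OF uV])
  finally show ?thesis .
qed

lemma rdiag_trace: "mtrace (rdiag s) = of_real (\<Sum>k\<in>UNIV. s $ k)"
  by (simp add: mtrace_def rdiag_def)

lemma svd_trace:
  assumes uU: "unitary U" and uV: "unitary V" and A: "A = U ** rdiag s ** adj V"
  shows "mtrace (adj U ** A ** V) = of_real (\<Sum>k\<in>UNIV. s $ k)"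
proof -
  have "adj U ** A ** V = (adj U ** U) ** rdiag s ** (adj V ** V)"
    by (simp add: A matrix_mul_assoc)
  also have "\<dots> = rdiag s" using uU uV by (simp add: unitary_def)
  finally show ?thesis by (simp add: rdiag_trace)
qed

lemma tr_unitary_conj:
  assumes "unitary U"
  shows "mtrace (adj U ** M ** U) = mtrace M"
proof -
  have "mtrace (adj U ** M ** U) = mtrace (U ** (adj U ** M))" by (rule mtrace_comm)
  also have "\<dots> = mtrace M" using unitary_right[OF assms] by (simp add: matrix_mul_assoc)
  finally show ?thesis .
qed

lemma tr_cs:
  fixes \<rho> :: "complex^'d^'d"
  assumes psd: "psd \<rho>" and uU: "unitary U" and uV: "unitary V"
  shows "cmod (mtrace (adj U ** (X ** \<rho> ** Y) ** V))
         \<le> sqrt (Re (mtrace (X ** \<rho> ** adj X))) * sqrt (Re (mtrace (adj Y ** \<rho> ** Y)))"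
proof -
  define a where "a k = adj X *v column k U" for k
  define b where "b k = Y *v column k V" for k
  define al where "al k = Re (cip (a k) (\<rho> *v a k))" for k
  define be where "be k = Re (cip (b k) (\<rho> *v b k))" for k
  have al0: "0 \<le> al k" for k using psd_form[OF psd] by (simp add: al_def)
  have be0: "0 \<le> be k" for k using psd_form[OF psd] by (simp add: be_def)
  have "mtrace (adj U ** (X ** \<rho> ** Y) ** V) = (\<Sum>k\<in>UNIV. cip (column k U) ((X ** \<rho> ** Y) *v column k V))"
    by (rule tr_cols)
  also have "\<dots> = (\<Sum>k\<in>UNIV. cip (a k) (\<rho> *v b k))"
    by (simp add: a_def b_def cip_adj[symmetric] matrix_vector_mul_assoc[symmetric])
  finally have tr: "mtrace (adj U ** (X ** \<rho> ** Y) ** V) = (\<Sum>k\<in>UNIV. cip (a k) (\<rho> *v b k))" .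
  have "cmod (\<Sum>k\<in>UNIV. cip (a k) (\<rho> *v b k)) \<le> (\<Sum>k\<in>UNIV. cmod (cip (a k) (\<rho> *v b k)))"
    by (rule norm_sum)
  also have "\<dots> \<le> (\<Sum>k\<in>UNIV. sqrt (al k) * sqrt (be k))"
  proof (rule sum_mono)
    fix k
    have "cmod (cip (a k) (\<rho> *v b k)) = sqrt ((cmod (cip (a k) (\<rho> *v b k)))\<^sup>2)" by simp
    also have "\<dots> \<le> sqrt (al k * be k)" unfolding al_def be_def
      by (rule real_sqrt_le_mono[OF cs_form[OF psd]])
    finally show "cmod (cip (a k) (\<rho> *v b k)) \<le> sqrt (al k) * sqrt (be k)" by (simp add: real_sqrt_mult)
  qed
  also have "\<dots> \<le> sqrt (sum al UNIV) * sqrt (sum be UNIV)"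
  proof -
    have "(\<Sum>k\<in>UNIV. sqrt (al k) * sqrt (be k))\<^sup>2 \<le> (\<Sum>k\<in>UNIV. (sqrt (al k))\<^sup>2) * (\<Sum>k\<in>UNIV. (sqrt (be k))\<^sup>2)"
      by (rule Cauchy_Schwarz_ineq_sum)
    also have "\<dots> = sum al UNIV * sum be UNIV" using al0 be0 by simp
    finally have "(\<Sum>k\<in>UNIV. sqrt (al k) * sqrt (be k)) \<le> sqrt (sum al UNIV * sum be UNIV)"
      by (rule real_le_rsqrt)
    thus ?thesis by (simp add: real_sqrt_mult)
  qed
  also have "sum al UNIV = Re (mtrace (X ** \<rho> ** adj X))"
  proof -
    have "sum al UNIV = Re (\<Sum>k\<in>UNIV. cip (column k U) ((X ** \<rho> ** adj X) *v column k U))"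
      by (simp add: al_def a_def Re_sum cip_adj matrix_vector_mul_assoc[symmetric])
    also have "\<dots> = Re (mtrace (adj U ** (X ** \<rho> ** adj X) ** U))" by (simp add: tr_cols)
    also have "\<dots> = Re (mtrace (X ** \<rho> ** adj X))" by (simp add: tr_unitary_conj[OF uU])
    finally show ?thesis .
  qed
  also have "sum be UNIV = Re (mtrace (adj Y ** \<rho> ** Y))"
  proof -
    have "sum be UNIV = Re (\<Sum>k\<in>UNIV. cip (column k V) ((adj Y ** \<rho> ** Y) *v column k V))"
      by (simp add: be_def b_def Re_sum cip_adj matrix_vector_mul_assoc[symmetric])
    also have "\<dots> = Re (mtrace (adj V ** (adj Y ** \<rho> ** Y) ** V))" by (simp add: tr_cols)
    also have "\<dots> = Re (mtrace (adj Y ** \<rho> ** Y))" by (simp add: tr_unitary_conj[OF uV])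
    finally show ?thesis .
  qed
  finally show ?thesis using tr by simp
qed



lemma smv: "((r::real) *\<^sub>R (M::complex^'n^'m)) *v x = r *\<^sub>R (M *v x)"
  by (simp add: vec_eq_iff matrix_vector_mult_def scaleR_sum_right)

lemma L_add: "mtrace (adj U ** (M + N) ** V) = mtrace (adj U ** M ** V) + mtrace (adj U ** N ** V)"
  by (simp add: tr_cols matrix_vector_mult_add_rdistrib cip_add_right sum.distrib)
lemma L_diff: "mtrace (adj U ** (M - N) ** V) = mtrace (adj U ** M ** V) - mtrace (adj U ** N ** V)"
  by (simp add: tr_cols matrix_vector_mult_diff_rdistrib cip_diff_right sum_subtractf)
lemma L_scale: "mtrace (adj U ** (r *\<^sub>R M) ** V) = of_real r * mtrace (adj U ** M ** V)"
  by (simp add: tr_cols smv cip_scaleR_right sum_distrib_left)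

lemma proj_right: "(M ** proj I) $ i $ j = (if j \<in> I then M $ i $ j else 0)"
proof -
  have "(M ** proj I) $ i $ j = (\<Sum>k\<in>UNIV. M $ i $ k * (if k = j \<and> k \<in> I then 1 else 0))"
    by (simp add: matrix_matrix_mult_def proj_def)
  also have "\<dots> = (\<Sum>k\<in>UNIV. if k = j then (if j \<in> I then M $ i $ j else 0) else 0)"
    by (rule sum.cong) auto
  finally show ?thesis by simp
qed
lemma proj_left: "(proj I ** M) $ i $ j = (if i \<in> I then M $ i $ j else 0)"
proof -
  have "(proj I ** M) $ i $ j = (\<Sum>k\<in>UNIV. (if i = k \<and> i \<in> I then 1 else 0) * M $ k $ j)"
    by (simp add: matrix_matrix_mult_def proj_def)
  also have "\<dots> = (\<Sum>k\<in>UNIV. if k = i then (if i \<in> I then M $ i $ j else 0) else 0)"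
    by (rule sum.cong) auto
  finally show ?thesis by simp
qed
lemma proj_adj: "adj (proj I) = proj I"
  by (simp add: vec_eq_iff adj_def proj_def)
lemma proj_idem: "proj I ** proj I = proj I"
  by (simp add: vec_eq_iff proj_right) (simp add: proj_def)
lemma mtrace_proj: "mtrace (M ** proj I) = (\<Sum>i\<in>I. M $ i $ i)"
  by (simp add: mtrace_def proj_right sum.If_cases)

lemma proj_compl: "proj I + proj (- I) = mat 1"
  by (simp add: vec_eq_iff proj_def mat_def)



lemma final_real:
  fixes t e :: real
  assumes t0: "0 < t" and t1: "t \<le> 1" and e0: "0 < e" and e2: "e < 2" and h: "2 * (1 - t) \<le> e\<^sup>2 / 4"
  shows "2 * (1 - t) + 2 * (sqrt t * sqrt (1 - t)) \<le> e"
proof -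
  define s where "s = 1 - t"
  have s0: "0 \<le> s" and se: "8 * s \<le> e\<^sup>2" using t1 h by (auto simp: s_def)
  have id: "(e - 2 * s)\<^sup>2 - 4 * (s * (1 - s)) = (s - e\<^sup>2 / 8) * (8 * s + e\<^sup>2 - 4 * (e + 1)) + e\<^sup>2 * (e - 2)\<^sup>2 / 8"
    by (simp add: field_simps power2_eq_square)
  have f1: "s - e\<^sup>2 / 8 \<le> 0" using se by simp
  have "e\<^sup>2 < 2 * e" using e0 e2 by (simp add: power2_eq_square)
  hence f2: "8 * s + e\<^sup>2 - 4 * (e + 1) \<le> 0" using se by simp
  have "0 \<le> (s - e\<^sup>2 / 8) * (8 * s + e\<^sup>2 - 4 * (e + 1))" using f1 f2 by (rule mult_nonpos_nonpos)
  moreover have "0 \<le> e\<^sup>2 * (e - 2)\<^sup>2 / 8" by simp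
  ultimately have q: "4 * (s * (1 - s)) \<le> (e - 2 * s)\<^sup>2" using id by linarith
  have pos: "0 \<le> e - 2 * s"
  proof -
    have "2 * s \<le> e\<^sup>2 / 4" using se by simp
    also have "\<dots> \<le> e" using e0 e2 by (simp add: power2_eq_square)
    finally show ?thesis by simp
  qed
  have s4: "sqrt 4 = (2::real)"
    by (metis abs_numeral power2_eq_square real_sqrt_abs2 numeral_times_numeral semiring_norm(12) semiring_norm(13))
  have "sqrt (4 * (s * (1 - s))) = sqrt 4 * (sqrt s * sqrt (1 - s))" by (simp only: real_sqrt_mult)
  hence "2 * (sqrt t * sqrt s) = sqrt (4 * (s * (1 - s)))"
    by (simp add: s_def s4 mult_ac)
  also have "\<dots> \<le> sqrt ((e - 2 * s)\<^sup>2)" using q by (rule real_sqrt_le_mono)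
  also have "\<dots> = e - 2 * s" using pos by simp
  finally show ?thesis by (simp add: s_def)
qed

lemma dens_diag:
  assumes "density \<rho>"
  shows "\<rho> $ i $ i = of_real (Re (\<rho> $ i $ i)) \<and> 0 \<le> Re (\<rho> $ i $ i)"
proof -
  have "cip (axis i 1) (\<rho> *v axis i 1) = \<rho> $ i $ i"
  proof -
    have "(\<rho> *v axis i 1) $ j = \<rho> $ j $ i" for j
    proof -
      have "(\<rho> *v axis i 1) $ j = (\<Sum>k\<in>UNIV. \<rho> $ j $ k * (if k = i then 1 else 0))"
        unfolding matrix_vector_mult_def axis_def by simp
      also have "\<dots> = (\<Sum>k\<in>UNIV. if k = i then \<rho> $ j $ i else 0)"
        by (rule sum.cong) auto
      finally show ?thesis by simp
    qed
    hence "cip (axis i 1) (\<rho> *v axis i 1) = (\<Sum>j\<in>UNIV. if j = i then \<rho> $ i $ i else 0)"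
      unfolding cip_def axis_def by (intro sum.cong) auto
    thus ?thesis by simp
  qed
  moreover have "psd \<rho>" using assms by (simp add: density_def)
  ultimately show ?thesis using psd_form[of \<rho> "axis i 1"] by (simp add: complex_eq_iff)
qed

lemma dens_trace:
  assumes "density \<rho>"
  shows "(\<Sum>i\<in>UNIV. Re (\<rho> $ i $ i)) = 1"
  using assms by (simp add: density_def mtrace_def flip: Re_sum)

lemma trPP: "mtrace (proj J ** M ** proj J) = mtrace (M ** proj J)"
proof -
  have "mtrace (proj J ** M ** proj J) = mtrace (proj J ** (proj J ** M))" by (rule mtrace_comm)
  also have "\<dots> = mtrace (proj J ** M)" by (simp add: matrix_mul_assoc proj_idem)
  also have "\<dots> = mtrace (M ** proj J)" by (rule mtrace_comm)
  finally show ?thesis .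
qed



lemma rho_facts:
  fixes \<rho> :: "complex^'d^'d"
  assumes dens: "density \<rho>"
  shows "mtrace (\<rho> ** proj J) = of_real (\<Sum>i\<in>J. Re (\<rho> $ i $ i))"
    and "0 \<le> (\<Sum>i\<in>J. Re (\<rho> $ i $ i))"
    and "(\<Sum>i\<in>J. Re (\<rho> $ i $ i)) \<le> 1"
proof -
  have "mtrace (\<rho> ** proj J) = (\<Sum>i\<in>J. \<rho> $ i $ i)" by (simp add: mtrace_proj)
  also have "\<dots> = (\<Sum>i\<in>J. of_real (Re (\<rho> $ i $ i)))"
    by (rule sum.cong) (use dens_diag[OF dens] in auto)
  finally show "mtrace (\<rho> ** proj J) = of_real (\<Sum>i\<in>J. Re (\<rho> $ i $ i))" by simp
  show "0 \<le> (\<Sum>i\<in>J. Re (\<rho> $ i $ i))" using dens_diag[OF dens] by (simp add: sum_nonneg)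
  have "(\<Sum>i\<in>J. Re (\<rho> $ i $ i)) \<le> (\<Sum>i\<in>UNIV. Re (\<rho> $ i $ i))"
    using dens_diag[OF dens] by (intro sum_mono2) auto
  thus "(\<Sum>i\<in>J. Re (\<rho> $ i $ i)) \<le> 1" using dens_trace[OF dens] by simp
qed

lemma sig_scale:
  fixes \<rho> :: "complex^'d^'d"
  assumes dens: "density \<rho>" and tpos: "0 < Re (mtrace (\<rho> ** proj I))"
    and sig: "\<sigma> = (\<chi> i j. (proj I ** \<rho> ** proj I) $ i $ j / mtrace (\<rho> ** proj I))"
  shows "\<sigma> = (1 / Re (mtrace (\<rho> ** proj I))) *\<^sub>R (proj I ** \<rho> ** proj I)"
proof -
  have m: "mtrace (\<rho> ** proj I) = of_real (Re (mtrace (\<rho> ** proj I)))"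
    using rho_facts(1)[OF dens, of I] by simp
  show ?thesis
    unfolding sig vec_eq_iff
    by (subst m) (simp add: scaleR_conv_of_real[where 'a=complex] divide_inverse mult.commute)
qed

lemma sig_herm:
  fixes \<rho> :: "complex^'d^'d"
  assumes dens: "density \<rho>" and tpos: "0 < Re (mtrace (\<rho> ** proj I))"
    and sig: "\<sigma> = (\<chi> i j. (proj I ** \<rho> ** proj I) $ i $ j / mtrace (\<rho> ** proj I))"
  shows "hermitian (\<sigma> - \<rho>)"
proof -
  have herm: "adj \<rho> = \<rho>" using dens by (simp add: density_def psd_def hermitian_def)
  show ?thesis
    unfolding hermitian_def sig_scale[OF dens tpos sig]
    by (simp add: adj_diff adj_scaleR adj_mult proj_adj herm matrix_mul_assoc)
qed

lemma sig_diag: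
  fixes \<rho> :: "complex^'d^'d"
  assumes dens: "density \<rho>" and tpos: "0 < Re (mtrace (\<rho> ** proj I))"
    and sig: "\<sigma> = (\<chi> i j. (proj I ** \<rho> ** proj I) $ i $ j / mtrace (\<rho> ** proj I))"
  shows "diagv \<sigma> = (\<chi> i. if i \<in> I then diagv \<rho> $ i / (\<Sum>k\<in>I. diagv \<rho> $ k) else 0)"
proof -
  have m: "mtrace (\<rho> ** proj I) = of_real (\<Sum>k\<in>I. diagv \<rho> $ k)"
    using rho_facts(1)[OF dens, of I] by (simp add: diagv_def)
  show ?thesis
    unfolding vec_eq_iff
    by (simp add: sig m diagv_def proj_left proj_right Re_divide_of_real)
qed



lemma matrix_add_rdistrib: "((A + B) ** C) = (A ** C) + (B ** (C::'a::semiring_1^'n^'m))"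
  by (simp add: vec_eq_iff matrix_matrix_mult_def sum.distrib distrib_right)

lemma gentle:
  fixes \<rho> :: "complex^'d^'d"
  assumes dens: "density \<rho>" and tpos: "0 < Re (mtrace (\<rho> ** proj I))"
    and sig: "\<sigma> = (\<chi> i j. (proj I ** \<rho> ** proj I) $ i $ j / mtrace (\<rho> ** proj I))"
    and eps: "0 < eps" and h: "2 * (1 - Re (mtrace (\<rho> ** proj I))) \<le> eps\<^sup>2 / 4"
  shows "trace_norm (\<sigma> - \<rho>) \<le> eps"
proof -
  define P where "P = proj I"
  define Q where "Q = proj (- I)"
  define t where "t = Re (mtrace (\<rho> ** P))"
  define c where "c = 1 / t"
  have psd: "psd \<rho>" using dens by (simp add: density_def)
  have t0: "0 < t" using tpos by (simp add: t_def P_def)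
  have tr1: "mtrace \<rho> = 1" using dens by (simp add: density_def)
  have tQ: "Re (mtrace (\<rho> ** Q)) = 1 - t"
  proof -
    have "mtrace (\<rho> ** P) + mtrace (\<rho> ** Q) = mtrace (\<rho> ** (P + Q))"
      by (simp add: matrix_add_ldistrib mtrace_add)
    also have "\<dots> = 1" by (simp add: P_def Q_def proj_compl tr1)
    finally show ?thesis by (simp add: t_def complex_eq_iff)
  qed
  have t1: "t \<le> 1" using rho_facts(2)[OF dens, of "- I"] rho_facts(1)[OF dens, of "- I"] tQ
    by (simp add: Q_def)
  have sig': "\<sigma> = c *\<^sub>R (P ** \<rho> ** P)" using sig_scale[OF dens tpos sig] by (simp add: c_def t_def P_def)
  obtain U V s where uU: "unitary U" and uV: "unitary V" and s0: "\<forall>i. 0 \<le> s $ i"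
      and A: "\<sigma> - \<rho> = U ** rdiag s ** adj V" and tn: "trace_norm (\<sigma> - \<rho>) = (\<Sum>i\<in>UNIV. s $ i)"
    using trace_norm_svd[OF sig_herm[OF dens tpos sig]] by blast
  define LL where "LL M = mtrace (adj U ** M ** V)" for M
  have tnL: "of_real (trace_norm (\<sigma> - \<rho>)) = LL (\<sigma> - \<rho>)"
    unfolding LL_def tn by (rule svd_trace[OF uU uV A, symmetric])
  hence tnle: "trace_norm (\<sigma> - \<rho>) \<le> cmod (LL (\<sigma> - \<rho>))"
    by (metis Re_complex_of_real complex_Re_le_cmod)
  have LB: "cmod (LL (proj J1 ** \<rho> ** proj J2)) \<le> sqrt (Re (mtrace (\<rho> ** proj J1))) * sqrt (Re (mtrace (\<rho> ** proj J2)))" for J1 J2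
    using tr_cs[OF psd uU uV, of "proj J1" "proj J2"] unfolding LL_def
    by (simp add: proj_adj trPP)
  have LP: "cmod (LL (P ** \<rho> ** P)) \<le> t" using LB[of I I] t0 by (simp add: P_def t_def)
  have LPQ: "cmod (LL (P ** \<rho> ** Q)) \<le> sqrt t * sqrt (1 - t)" using LB[of I "- I"] tQ by (simp add: P_def Q_def t_def)
  have LQP: "cmod (LL (Q ** \<rho> ** P)) \<le> sqrt t * sqrt (1 - t)" using LB[of "- I" I] tQ by (simp add: P_def Q_def t_def mult.commute)
  have LQ: "cmod (LL (Q ** \<rho> ** Q)) \<le> 1 - t" using LB[of "- I" "- I"] tQ t1 by (simp add: P_def Q_def t_def)
  have Lrho: "cmod (LL \<rho>) \<le> 1"
    using tr_cs[OF psd uU uV, of "mat 1" "mat 1"] unfolding LL_def by (simp add: tr1)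
  have dec: "\<rho> = P ** \<rho> ** P + P ** \<rho> ** Q + Q ** \<rho> ** P + Q ** \<rho> ** Q"
  proof -
    have "\<rho> = (P + Q) ** \<rho> ** (P + Q)" by (simp add: P_def Q_def proj_compl)
    thus ?thesis by (simp add: matrix_add_ldistrib matrix_add_rdistrib add_ac)
  qed
  have e1: "LL (\<sigma> - \<rho>) = of_real c * LL (P ** \<rho> ** P) - LL \<rho>"
    unfolding LL_def sig' by (simp add: L_diff L_scale)
  have e2: "LL (\<sigma> - \<rho>) = of_real (c - 1) * LL (P ** \<rho> ** P) - LL (P ** \<rho> ** Q) - LL (Q ** \<rho> ** P) - LL (Q ** \<rho> ** Q)"
  proof -
    have "LL \<rho> = LL (P ** \<rho> ** P) + LL (P ** \<rho> ** Q) + LL (Q ** \<rho> ** P) + LL (Q ** \<rho> ** Q)"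
      by (subst dec) (simp add: LL_def L_add)
    thus ?thesis using e1 by (simp add: algebra_simps)
  qed
  have c1: "1 \<le> c" using t0 t1 by (simp add: c_def)
  have ct: "c * t = 1" using t0 by (simp add: c_def)
  have b2: "cmod (LL (\<sigma> - \<rho>)) \<le> 2"
  proof -
    have "cmod (LL (\<sigma> - \<rho>)) \<le> cmod (of_real c * LL (P ** \<rho> ** P)) + cmod (LL \<rho>)"
      unfolding e1 by (rule norm_triangle_ineq4)
    also have "\<dots> \<le> c * t + 1" using LP Lrho c1 by (simp add: norm_mult) (intro add_mono mult_left_mono, auto)
    finally show ?thesis using ct by simp
  qed
  have b1: "cmod (LL (\<sigma> - \<rho>)) \<le> 2 * (1 - t) + 2 * (sqrt t * sqrt (1 - t))"
  proof -
    have x1: "cmod (LL (\<sigma> - \<rho>)) \<le> cmod (of_real (c - 1) * LL (P ** \<rho> ** P)) + cmod (LL (P ** \<rho> ** Q))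
          + cmod (LL (Q ** \<rho> ** P)) + cmod (LL (Q ** \<rho> ** Q))"
      unfolding e2 by (smt (verit) norm_triangle_ineq4)
    have x2: "cmod (of_real (c - 1) * LL (P ** \<rho> ** P)) \<le> (c - 1) * t"
      using LP c1 unfolding norm_mult norm_of_real by (simp add: mult_left_mono)
    have x3: "(c - 1) * t = 1 - t" using ct by (simp add: algebra_simps)
    show ?thesis using x1 x2 x3 LPQ LQP LQ by (smt (verit))
  qed
  show ?thesis
  proof (cases "eps < 2")
    case True
    have "2 * (1 - t) + 2 * (sqrt t * sqrt (1 - t)) \<le> eps"
      using final_real[OF t0 t1 eps True] h by (simp add: t_def P_def)
    thus ?thesis using tnle b1 by linarith
  next
    case False
    thus ?thesis using tnle b2 by linarith
  qed
qed



lemma split_univ: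
  fixes I :: "'a::finite set"
  shows "(\<Sum>i\<in>UNIV. f i) = (\<Sum>i\<in>I. f i) + (\<Sum>i\<in>-I. (f i :: real))"
  using sum.subset_diff[of I UNIV f] by (simp add: Compl_eq_Diff_UNIV add.commute)

theorem lemma9:
  fixes \<rho> :: "complex^'d^'d" and eps :: real and f :: "real^'d \<Rightarrow> real"
  assumes "density \<rho>" and "0 < eps"
  shows "Min (f ` Vc eps (diagv \<rho>)) \<le> Min ((\<lambda>\<sigma>. f (diagv \<sigma>)) ` Vq eps \<rho>)
       \<and> Min ((\<lambda>\<sigma>. f (diagv \<sigma>)) ` Vq eps \<rho>) \<le> Min (f ` Vc (eps\<^sup>2 / 4) (diagv \<rho>))"
proof -
  note dens = assms(1)
  define p where "p = diagv \<rho>"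
  have p0: "0 \<le> p $ i" for i using dens_diag[OF dens] by (simp add: p_def diagv_def)
  have p1: "(\<Sum>i\<in>UNIV. p $ i) = 1" using dens_trace[OF dens] by (simp add: p_def diagv_def)
  have trI: "Re (mtrace (\<rho> ** proj I)) = (\<Sum>i\<in>I. p $ i)" for I
    using rho_facts(1)[OF dens, of I] by (simp add: p_def diagv_def)
  define sg where "sg I = (\<chi> i j. (proj I ** \<rho> ** proj I) $ i $ j / mtrace (\<rho> ** proj I))" for I
  define qv where "qv I = (\<chi> i. if i \<in> I then p $ i / (\<Sum>k\<in>I. p $ k) else 0)" for I
  have fq: "finite (Vq e \<rho>)" for e
  proof (rule finite_subset)
    show "Vq e \<rho> \<subseteq> range sg" by (auto simp: Vq_def sg_def)
  qed simp
  have fc: "finite (Vc e p)" for e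
  proof (rule finite_subset)
    show "Vc e p \<subseteq> range qv" by (auto simp: Vc_def qv_def)
  qed simp
  have D1: "diagv ` Vq eps \<rho> \<subseteq> Vc eps p"
  proof
    fix q assume "q \<in> diagv ` Vq eps \<rho>"
    then obtain \<sigma> I where I: "0 < Re (mtrace (\<rho> ** proj I))" and sig: "\<sigma> = sg I"
        and tn: "trace_norm (\<sigma> - \<rho>) \<le> eps" and q: "q = diagv \<sigma>"
      by (auto simp: Vq_def sg_def)
    have sig': "\<sigma> = (\<chi> i j. (proj I ** \<rho> ** proj I) $ i $ j / mtrace (\<rho> ** proj I))"
      using sig by (simp add: sg_def)
    have qq: "q = qv I" using sig_diag[OF dens I sig'] q unfolding qv_def p_def by simp
    obtain U V s where uU: "unitary U" and uV: "unitary V" and s0: "\<forall>i. 0 \<le> s $ i"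
        and A: "\<sigma> - \<rho> = U ** rdiag s ** adj V" and tns: "trace_norm (\<sigma> - \<rho>) = (\<Sum>i\<in>UNIV. s $ i)"
      using trace_norm_svd[OF sig_herm[OF dens I sig']] by blast
    have "(\<Sum>i\<in>UNIV. \<bar>q $ i - p $ i\<bar>) \<le> (\<Sum>i\<in>UNIV. cmod ((\<sigma> - \<rho>) $ i $ i))"
      by (rule sum_mono) (simp add: q p_def diagv_def abs_Re_le_cmod flip: minus_complex.sel)
    also have "\<dots> \<le> (\<Sum>i\<in>UNIV. s $ i)" by (rule svd_diag_bound[OF uU uV s0 A])
    finally have "(\<Sum>i\<in>UNIV. \<bar>q $ i - p $ i\<bar>) \<le> eps" using tn tns by simp
    moreover have "0 < (\<Sum>i\<in>I. p $ i)" using I trI by simp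
    ultimately show "q \<in> Vc eps p" unfolding Vc_def using qq by (auto simp: qv_def)
  qed
  have D2: "Vc (eps\<^sup>2 / 4) p \<subseteq> diagv ` Vq eps \<rho>"
  proof
    fix q assume "q \<in> Vc (eps\<^sup>2 / 4) p"
    then obtain I where I: "0 < (\<Sum>i\<in>I. p $ i)" and q: "q = qv I"
        and d: "(\<Sum>i\<in>UNIV. \<bar>q $ i - p $ i\<bar>) \<le> eps\<^sup>2 / 4"
      by (auto simp: Vc_def qv_def)
    define T where "T = (\<Sum>i\<in>I. p $ i)"
    have T0: "0 < T" using I by (simp add: T_def)
    have T1: "T \<le> 1" using rho_facts(3)[OF dens, of I] by (simp add: T_def p_def diagv_def)
    have "(\<Sum>i\<in>UNIV. \<bar>q $ i - p $ i\<bar>) = (\<Sum>i\<in>I. \<bar>q $ i - p $ i\<bar>) + (\<Sum>i\<in>-I. \<bar>q $ i - p $ i\<bar>)"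
      by (rule split_univ)
    also have "(\<Sum>i\<in>I. \<bar>q $ i - p $ i\<bar>) = (\<Sum>i\<in>I. p $ i * (1 / T - 1))"
    proof (rule sum.cong)
      fix i assume "i \<in> I"
      hence "q $ i - p $ i = p $ i * (1 / T - 1)" by (simp add: q qv_def T_def algebra_simps)
      moreover have "0 \<le> p $ i * (1 / T - 1)" using p0[of i] T0 T1 by (simp add: field_simps mult_left_le_one_le)
      ultimately show "\<bar>q $ i - p $ i\<bar> = p $ i * (1 / T - 1)" by simp
    qed simp
    also have "\<dots> = 1 - T" using T0 by (simp add: T_def flip: sum_distrib_right) (simp add: field_simps)
    also have "(\<Sum>i\<in>-I. \<bar>q $ i - p $ i\<bar>) = (\<Sum>i\<in>-I. p $ i)"
      by (rule sum.cong) (auto simp: q qv_def p0)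
    also have "(\<Sum>i\<in>-I. p $ i) = 1 - T" using split_univ[of "\<lambda>i. p $ i" I] p1 by (simp add: T_def)
    finally have "2 * (1 - T) \<le> eps\<^sup>2 / 4" using d by simp
    hence tn: "trace_norm (sg I - \<rho>) \<le> eps"
      using gentle[OF dens _ _ assms(2)] I trI by (simp add: sg_def T_def)
    have "sg I \<in> Vq eps \<rho>" using tn I trI unfolding Vq_def sg_def by auto
    moreover have "diagv (sg I) = q"
      using sig_diag[OF dens _ refl, of I] I trI unfolding sg_def q qv_def p_def by simp
    ultimately show "q \<in> diagv ` Vq eps \<rho>" by blast
  qed
  have pin: "p \<in> Vc (eps\<^sup>2 / 4) p"
  proof -
    show ?thesis unfolding Vc_def using p1 by (auto intro!: exI[of _ UNIV] simp: vec_eq_iff)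
  qed
  have ne: "Vq eps \<rho> \<noteq> {}" using D2 pin by blast
  have img: "(\<lambda>\<sigma>. f (diagv \<sigma>)) ` Vq eps \<rho> = f ` (diagv ` Vq eps \<rho>)" by (simp add: image_image)
  show ?thesis
  proof
    show "Min (f ` Vc eps (diagv \<rho>)) \<le> Min ((\<lambda>\<sigma>. f (diagv \<sigma>)) ` Vq eps \<rho>)"
      unfolding img p_def[symmetric]
      by (rule Min_antimono) (use D1 ne fc in auto)
    show "Min ((\<lambda>\<sigma>. f (diagv \<sigma>)) ` Vq eps \<rho>) \<le> Min (f ` Vc (eps\<^sup>2 / 4) (diagv \<rho>))"
      unfolding img p_def[symmetric]
      by (rule Min_antimono) (use D2 pin fq in auto)
  qed
qed


end
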